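(* Let $\sigma(x,y)=(x\rightharpoonup y,x\leftharpoonup y)$ be an involutive left-non-degenerate quiver-theoretic Yang--Baxter map on a quiver $\mathscr{A}$ over $\Lambda$, let $x\star y:=(x\rightharpoonup\cdot)^{-1}(y)$ for $\mathfrak{s}(x)=\mathfrak{s}(y)$, and let $(\hat{\mathscr{A}},\hat\star)$ be the completion of the weak RC-system $(\mathscr{A},\star)$. Then the structure category $\mathscr{C}(\hat{\mathscr{A}})$ of the unital weak RC-system $(\hat{\mathscr{A}},\hat\star)$ is isomorphic to the structure category $\mathscr{C}(\sigma)$ of $\sigma$.
   Context: A quiver-theoretic Yang--Baxter map is a source/target-preserving map $\sigma$ on composable pairs satisfying the braid relation; involutive: $\sigma^2=\mathrm{id}$; left-non-degenerate: each $x\rightharpoonup\cdot\colon\mathscr{A}(\mathfrak{t}(x),\Lambda)\to\mathscr{A}(\mathfrak{s}(x),\Lambda)$ is bijective. $\mathscr{C}(\sigma)$ is the category presented by generators $\mathscr{A}$ and relations $x|y\sim(x\rightharpoonup y)|(x\leftharpoonup y)$ (path category modulo the generated congruence). A weak RC-system $(Q,\star)$: a quiver with partial operation such that $x\star y$ is defined only if $\mathfrak{s}(x)=\mathfrak{s}(y)$; if $x\star y$ is defined so is $y\star x$, $\mathfrak{s}(x\star y)=\mathfrak{t}(x)$, $\mathfrak{s}(y\star x)=\mathfrak{t}(y)$, $\mathfrak{t}(x\star y)=\mathfrak{t}(y\star x)$; and RC-law: if $x\star y,x\star z,(x\star y)\star(x\star z)$ are defined then $y\star z,(y\star x)\star(y\star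 z)$ are defined and $(x\star y)\star(x\star z)=(y\star x)\star(y\star z)$. A unit family is a family $\mathcal{E}=\{\epsilon_\lambda\}$ of loops $\epsilon_\lambda\colon\lambda\to\lambda$ with $x\star\epsilon_{\mathfrak{s}(x)}=\epsilon_{\mathfrak{t}(x)}$, $\epsilon_{\mathfrak{s}(x)}\star x=x$, $x\star x=\epsilon_{\mathfrak{t}(x)}$ (all defined) for all $x$; the system is unital if it has a unit family and $x\star y=y\star x=\epsilon_\mu$ with $x,y$ of target $\mu$ implies $x=y$. The completion $(\hat Q,\hat\star)$ adds a new loop $\epsilon_\lambda\notin Q$ at each vertex and sets $\epsilon_{\mathfrak{s}(y)}\hat\star y=y$, $x\hat\star\epsilon_{\mathfrak{s}(x)}=\epsilon_{\mathfrak{t}(x)}$, $x\hat\star x=\epsilon_{\mathfrak{t}(x)}$, and $x\hat\star y=x\star y$ otherwise. For a unital weak RC-system, $\star$ extends to paths by filling grids: for nonempty paths $\alpha=a_1|\dots|a_r$, $\beta=b_1|\dots|b_s$ with common source, fill an $r\times s$ grid whose squares are $(x,y)\mapsto(x\star y,y\star x)$ and let $\alpha\star\beta$ be the right column; with $\varepsilon\star\varepsilon=\varepsilon$, $\varepsilon\star\alpha=\alpha$, $\alpha\star\varepsilon=\varepsilon$ for empty paths $\varepsilon$. Define $\alpha\equiv\beta$ iff $\alpha\star\beta$ and $\beta\star\alpha$ both lie in $\mathrm{Path}(\mathcal{E})$; this is a congruence and the structure category is $\mathscr{C}(Q)=\mathrm{Path}(Q)/\!\equiv$. (Under the hypotheses,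 $(\hat{\mathscr{A}},\hat\star)$ is a unital weak RC-system.) *)

theory Defs
  imports Main
begin

text \<open>A path is a pair (v, xs): a start vertex v and a list of arrows x1,...,xr
  (composed left to right: x1|x2|...|xr with t xi = s x(i+1)).\<close>

fun path_ok :: "('a \<Rightarrow> 'v) \<Rightarrow> ('a \<Rightarrow> 'v) \<Rightarrow> 'v \<Rightarrow> 'a list \<Rightarrow> bool" where
  "path_ok s t v [] = True"
| "path_ok s t v (x # xs) = (s x = v \<and> path_ok s t (t x) xs)"

fun ptgt :: "('a \<Rightarrow> 'v) \<Rightarrow> 'v \<Rightarrow> 'a list \<Rightarrow> 'v" where
  "ptgt t v [] = v"
| "ptgt t v (x # xs) = ptgt t (t x) xs"

definition Paths :: "'v set \<Rightarrow> 'a set \<Rightarrow> ('a \<Rightarrow> 'v) \<Rightarrow> ('a \<Rightarrow> 'v) \<Rightarrow> ('v \<times> 'a list) set" where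
  "Paths V A s t = {(v, xs). v \<in> V \<and> set xs \<subseteq> A \<and> path_ok s t v xs}"

text \<open>Composition is written in diagrammatic order: Comp f g = "f then g",
  defined when Cod f = Dom g.\<close>

record ('o, 'm) cat =
  Ob :: "'o set"
  Mor :: "'m set"
  Dom :: "'m \<Rightarrow> 'o"
  Cod :: "'m \<Rightarrow> 'o"
  Idm :: "'o \<Rightarrow> 'm"
  Comp :: "'m \<Rightarrow> 'm \<Rightarrow> 'm"

definition cat_iso :: "('o1, 'm1) cat \<Rightarrow> ('o2, 'm2) cat \<Rightarrow> bool" where
  "cat_iso C D \<longleftrightarrow> (\<exists>Fo Fm.
      bij_betw Fo (Ob C) (Ob D) \<and> bij_betw Fm (Mor C) (Mor D) \<and>
      (\<forall>f\<in>Mor C. Dom D (Fm f) = Fo (Dom C f) \<and> Cod D (Fm f) = Fo (Cod C f)) \<and>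
      (\<forall>a\<in>Ob C. Fm (Idm C a) = Idm D (Fo a)) \<and>
      (\<forall>f\<in>Mor C. \<forall>g\<in>Mor C. Cod C f = Dom C g \<longrightarrow>
          Fm (Comp C f g) = Comp D (Fm f) (Fm g)))"


definition pcls :: "('v \<times> 'a list) set \<Rightarrow> (('v \<times> 'a list) \<Rightarrow> ('v \<times> 'a list) \<Rightarrow> bool)
    \<Rightarrow> ('v \<times> 'a list) \<Rightarrow> ('v \<times> 'a list) set" where
  "pcls P R p = {q \<in> P. R p q}"

text \<open>Path(Q)/R: objects are the vertices, morphisms the R-classes of paths,
  identities the classes of empty paths, composition induced by concatenation
  of representatives.\<close>

definition path_quot_cat :: "'v set \<Rightarrow> 'a set \<Rightarrow> ('a \<Rightarrow> 'v) \<Rightarrow> ('a \<Rightarrow> 'v)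
    \<Rightarrow> (('v \<times> 'a list) \<Rightarrow> ('v \<times> 'a list) \<Rightarrow> bool) \<Rightarrow> ('v, ('v \<times> 'a list) set) cat" where
  "path_quot_cat V A s t R =
    \<lparr> Ob = V,
      Mor = pcls (Paths V A s t) R ` Paths V A s t,
      Dom = (\<lambda>X. fst (SOME p. p \<in> X)),
      Cod = (\<lambda>X. case (SOME p. p \<in> X) of (v, xs) \<Rightarrow> ptgt t v xs),
      Idm = (\<lambda>v. pcls (Paths V A s t) R (v, [])),
      Comp = (\<lambda>X Y. pcls (Paths V A s t) R
                 (fst (SOME p. p \<in> X), snd (SOME p. p \<in> X) @ snd (SOME q. q \<in> Y))) \<rparr>"

text \<open>sigma(x,y) = (lact x y, ract x y) = (x \<rightharpoonup> y, x \<leftharpoonup> y), for composable x|y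
  (t x = s y).\<close>

definition qYB_map :: "'v set \<Rightarrow> 'a set \<Rightarrow> ('a \<Rightarrow> 'v) \<Rightarrow> ('a \<Rightarrow> 'v)
    \<Rightarrow> ('a \<Rightarrow> 'a \<Rightarrow> 'a) \<Rightarrow> ('a \<Rightarrow> 'a \<Rightarrow> 'a) \<Rightarrow> bool" where
  "qYB_map V A s t lact ract \<longleftrightarrow>
    (\<forall>x\<in>A. s x \<in> V \<and> t x \<in> V) \<and>
    (\<forall>x\<in>A. \<forall>y\<in>A. t x = s y \<longrightarrow>
        lact x y \<in> A \<and> ract x y \<in> A \<and>
        s (lact x y) = s x \<and> t (lact x y) = s (ract x y) \<and> t (ract x y) = t y) \<and>
    (\<forall>x\<in>A. \<forall>y\<in>A. \<forall>z\<in>A. t x = s y \<and> t y = s z \<longrightarrow>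
      (let s1 = (\<lambda>(a, b, c). (lact a b, ract a b, c));
           s2 = (\<lambda>(a, b, c). (a, lact b c, ract b c))
       in s1 (s2 (s1 (x, y, z))) = s2 (s1 (s2 (x, y, z)))))"

definition qYB_involutive :: "'a set \<Rightarrow> ('a \<Rightarrow> 'v) \<Rightarrow> ('a \<Rightarrow> 'v)
    \<Rightarrow> ('a \<Rightarrow> 'a \<Rightarrow> 'a) \<Rightarrow> ('a \<Rightarrow> 'a \<Rightarrow> 'a) \<Rightarrow> bool" where
  "qYB_involutive A s t lact ract \<longleftrightarrow>
    (\<forall>x\<in>A. \<forall>y\<in>A. t x = s y \<longrightarrow>
       lact (lact x y) (ract x y) = x \<and> ract (lact x y) (ract x y) = y)"

definition qYB_left_nondeg :: "'a set \<Rightarrow> ('a \<Rightarrow> 'v) \<Rightarrow> ('a \<Rightarrow> 'v)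
    \<Rightarrow> ('a \<Rightarrow> 'a \<Rightarrow> 'a) \<Rightarrow> bool" where
  "qYB_left_nondeg A s t lact \<longleftrightarrow>
    (\<forall>x\<in>A. bij_betw (lact x) {y\<in>A. s y = t x} {y\<in>A. s y = s x})"

text \<open>Structure category C(sigma): path category modulo the congruence generated
  by x|y ~ (x \<rightharpoonup> y)|(x \<leftharpoonup> y).  The generated congruence is the equivalence
  closure of the one-step rewriting inside arbitrary contexts.\<close>

definition yb_step :: "'v set \<Rightarrow> 'a set \<Rightarrow> ('a \<Rightarrow> 'v) \<Rightarrow> ('a \<Rightarrow> 'v)
    \<Rightarrow> ('a \<Rightarrow> 'a \<Rightarrow> 'a) \<Rightarrow> ('a \<Rightarrow> 'a \<Rightarrow> 'a)
    \<Rightarrow> ('v \<times> 'a list) \<Rightarrow> ('v \<times> 'a list) \<Rightarrow> bool" where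
  "yb_step V A s t lact ract p q \<longleftrightarrow>
    p \<in> Paths V A s t \<and>
    (\<exists>v u x y w. p = (v, u @ [x, y] @ w) \<and> q = (v, u @ [lact x y, ract x y] @ w))"

definition yb_struct_cat :: "'v set \<Rightarrow> 'a set \<Rightarrow> ('a \<Rightarrow> 'v) \<Rightarrow> ('a \<Rightarrow> 'v)
    \<Rightarrow> ('a \<Rightarrow> 'a \<Rightarrow> 'a) \<Rightarrow> ('a \<Rightarrow> 'a \<Rightarrow> 'a) \<Rightarrow> ('v, ('v \<times> 'a list) set) cat" where
  "yb_struct_cat V A s t lact ract =
     path_quot_cat V A s t (equivclp (yb_step V A s t lact ract))"

text \<open>A partial operation is modelled as op :: 'b \<Rightarrow> 'b \<Rightarrow> 'b option.\<close>

definition yb_star :: "'a set \<Rightarrow> ('a \<Rightarrow> 'v) \<Rightarrow> ('a \<Rightarrow> 'v) \<Rightarrow> ('a \<Rightarrow> 'a \<Rightarrow> 'a)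
    \<Rightarrow> 'a \<Rightarrow> 'a \<Rightarrow> 'a option" where
  "yb_star A s t lact x y =
     (if s x = s y then Some (THE z. z \<in> A \<and> s z = t x \<and> lact x z = y) else None)"

text \<open>Completion: the new loop epsilon_v is Inr v (so it is not in Inl ` A).\<close>

definition compl_arrows :: "'v set \<Rightarrow> 'a set \<Rightarrow> ('a + 'v) set" where
  "compl_arrows V A = Inl ` A \<union> Inr ` V"

fun compl_src :: "('a \<Rightarrow> 'v) \<Rightarrow> ('a + 'v) \<Rightarrow> 'v" where
  "compl_src s (Inl a) = s a"
| "compl_src s (Inr v) = v"

fun compl_tgt :: "('a \<Rightarrow> 'v) \<Rightarrow> ('a + 'v) \<Rightarrow> 'v" where
  "compl_tgt t (Inl a) = t a"
| "compl_tgt t (Inr v) = v"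

definition compl_op :: "('a \<Rightarrow> 'v) \<Rightarrow> ('a \<Rightarrow> 'v) \<Rightarrow> ('a \<Rightarrow> 'a \<Rightarrow> 'a option)
    \<Rightarrow> ('a + 'v) \<Rightarrow> ('a + 'v) \<Rightarrow> ('a + 'v) option" where
  "compl_op s t op x y =
     (if compl_src s x \<noteq> compl_src s y then None
      else if x = Inr (compl_src s y) then Some y
      else if y = Inr (compl_src s x) then Some (Inr (compl_tgt t x))
      else if x = y then Some (Inr (compl_tgt t x))
      else (case (x, y) of (Inl a, Inl b) \<Rightarrow> map_option Inl (op a b) | _ \<Rightarrow> None))"

text \<open>Extension of star to paths by filling grids.  For an arrow x and a path
  beta = b1|...|bs with the same source, rcol op x beta is the right column
  (x star b1)|(x' star b2)|... where x' = b1 star x etc.  For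
  alpha = a1|...|ar, alpha star beta is obtained column by column.\<close>

fun rcol :: "('b \<Rightarrow> 'b \<Rightarrow> 'b option) \<Rightarrow> 'b \<Rightarrow> 'b list \<Rightarrow> 'b list option" where
  "rcol op x [] = Some []"
| "rcol op x (b # bs) =
     (case op x b of None \<Rightarrow> None | Some c \<Rightarrow>
       (case op b x of None \<Rightarrow> None | Some x' \<Rightarrow>
         (case rcol op x' bs of None \<Rightarrow> None | Some cs \<Rightarrow> Some (c # cs))))"

fun pstar :: "('b \<Rightarrow> 'b \<Rightarrow> 'b option) \<Rightarrow> 'b list \<Rightarrow> 'b list \<Rightarrow> 'b list option" where
  "pstar op [] bs = Some bs"
| "pstar op (a # as) bs =
     (case rcol op a bs of None \<Rightarrow> None | Some cs \<Rightarrow> pstar op as cs)"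

definition rc_equiv :: "'v set \<Rightarrow> ('b \<Rightarrow> 'b \<Rightarrow> 'b option) \<Rightarrow> ('v \<Rightarrow> 'b)
    \<Rightarrow> ('v \<times> 'b list) \<Rightarrow> ('v \<times> 'b list) \<Rightarrow> bool" where
  "rc_equiv V op eps p q \<longleftrightarrow>
    fst p = fst q \<and>
    (\<exists>g. pstar op (snd p) (snd q) = Some g \<and> set g \<subseteq> eps ` V) \<and>
    (\<exists>d. pstar op (snd q) (snd p) = Some d \<and> set d \<subseteq> eps ` V)"

definition rc_struct_cat :: "'v set \<Rightarrow> 'b set \<Rightarrow> ('b \<Rightarrow> 'v) \<Rightarrow> ('b \<Rightarrow> 'v)
    \<Rightarrow> ('b \<Rightarrow> 'b \<Rightarrow> 'b option) \<Rightarrow> ('v \<Rightarrow> 'b) \<Rightarrow> ('v, ('v \<times> 'b list) set) cat" where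
  "rc_struct_cat V B s t op eps = path_quot_cat V B s t (rc_equiv V op eps)"

end

theory Submission
  imports Defs
begin


locale YB =
  fixes V :: "'v set" and A :: "'a set" and s t :: "'a \<Rightarrow> 'v"
    and lact ract :: "'a \<Rightarrow> 'a \<Rightarrow> 'a"
  assumes ybm: "qYB_map V A s t lact ract"
    and inv: "qYB_involutive A s t lact ract"
    and nd: "qYB_left_nondeg A s t lact"
begin

lemma st_V: "x \<in> A \<Longrightarrow> s x \<in> V \<and> t x \<in> V"
  using ybm unfolding qYB_map_def by blast

lemma sig: "x \<in> A \<Longrightarrow> y \<in> A \<Longrightarrow> t x = s y \<Longrightarrow>
   lact x y \<in> A \<and> ract x y \<in> A \<and> s (lact x y) = s x \<and> t (lact x y) = s (ract x y) \<and> t (ract x y) = t y"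
  using ybm unfolding qYB_map_def by blast

lemma ybe: "x \<in> A \<Longrightarrow> y \<in> A \<Longrightarrow> z \<in> A \<Longrightarrow> t x = s y \<Longrightarrow> t y = s z \<Longrightarrow>
   lact (lact x y) (lact (ract x y) z) = lact x (lact y z)"
proof -
  assume h: "x \<in> A" "y \<in> A" "z \<in> A" "t x = s y" "t y = s z"
  from ybm h have "(let s1 = (\<lambda>(a, b, c). (lact a b, ract a b, c));
           s2 = (\<lambda>(a, b, c). (a, lact b c, ract b c))
       in s1 (s2 (s1 (x, y, z))) = s2 (s1 (s2 (x, y, z))))"
    unfolding qYB_map_def by blast
  then show ?thesis by (simp add: Let_def)
qed

lemma invo: "x \<in> A \<Longrightarrow> y \<in> A \<Longrightarrow> t x = s y \<Longrightarrow>
       lact (lact x y) (ract x y) = x \<and> ract (lact x y) (ract x y) = y"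
  using inv unfolding qYB_involutive_def by blast

lemma ndb: "x \<in> A \<Longrightarrow> bij_betw (lact x) {y\<in>A. s y = t x} {y\<in>A. s y = s x}"
  using nd unfolding qYB_left_nondeg_def by blast

definition astar :: "'a \<Rightarrow> 'a \<Rightarrow> 'a" where
  "astar a b = (THE z. z \<in> A \<and> s z = t a \<and> lact a z = b)"

lemma AS1: assumes "a \<in> A" "b \<in> A" "s a = s b"
  shows "astar a b \<in> A \<and> s (astar a b) = t a \<and> lact a (astar a b) = b"
proof -
  have bb: "bij_betw (lact a) {y\<in>A. s y = t a} {y\<in>A. s y = s a}" using ndb assms by blast
  then have "b \<in> lact a ` {y\<in>A. s y = t a}" using assms unfolding bij_betw_def by auto
  then obtain z where z: "z \<in> A" "s z = t a" "lact a z = b" by auto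
  have "\<exists>!z. z \<in> A \<and> s z = t a \<and> lact a z = b"
  proof
    show "z \<in> A \<and> s z = t a \<and> lact a z = b" using z by blast
    fix w assume "w \<in> A \<and> s w = t a \<and> lact a w = b"
    then show "w = z" using z bb unfolding bij_betw_def inj_on_def by auto
  qed
  then show ?thesis unfolding astar_def by (rule theI')
qed

lemma AS2: assumes "a \<in> A" "z \<in> A" "s z = t a"
  shows "astar a (lact a z) = z"
proof -
  have bb: "bij_betw (lact a) {y\<in>A. s y = t a} {y\<in>A. s y = s a}" using ndb assms by blast
  have l: "lact a z \<in> A" "s (lact a z) = s a" using sig assms by auto
  have "astar a (lact a z) \<in> A \<and> s (astar a (lact a z)) = t a \<and> lact a (astar a (lact a z)) = lact a z"
    using AS1[OF assms(1) l(1)] l by auto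
  then show ?thesis using bb assms unfolding bij_betw_def inj_on_def by auto
qed

lemma AS3: assumes "a \<in> A" "b \<in> A" "s a = s b"
  shows "ract a (astar a b) = astar b a"
proof -
  define y where "y = astar a b"
  have y: "y \<in> A" "s y = t a" "lact a y = b" using AS1[OF assms] y_def by auto
  define r where "r = ract a y"
  have r: "r \<in> A" "t b = s r" "t r = t y" using sig[OF assms(1) y(1)] y r_def by auto
  have iv: "lact b r = a" "ract b r = y" using invo[OF assms(1) y(1)] y r_def by auto
  have "astar b (lact b r) = r" using AS2[OF assms(2) r(1)] r by simp
  then show ?thesis using iv r_def y_def by simp
qed

lemma AS4: assumes "a \<in> A" "b \<in> A" "s a = s b"
  shows "t (astar a b) = t (astar b a)"
proof -
  have y: "astar a b \<in> A" "s (astar a b) = t a" using AS1[OF assms] by auto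
  show ?thesis using sig[OF assms(1) y(1)] y AS3[OF assms] by simp
qed

lemma AS_inj: assumes "a \<in> A" "b \<in> A" "c \<in> A" "s a = s b" "s a = s c" "astar a b = astar a c"
  shows "b = c"
  using AS1[OF assms(1,2,4)] AS1[OF assms(1,3,5)] assms(6) by metis

lemma AS5: assumes "a \<in> A" "b \<in> A" "c \<in> A" "s a = s b" "s a = s c"
  shows "astar (astar a b) (astar a c) = astar (astar b a) (astar b c)"
proof -
  define y where "y = astar a b"
  have y: "y \<in> A" "s y = t a" "lact a y = b" using AS1[OF assms(1,2,4)] y_def by auto
  define w where "w = astar a c"
  have w: "w \<in> A" "s w = t a" "lact a w = c" using AS1[OF assms(1,3,5)] w_def by auto
  define z where "z = astar y w"
  have z: "z \<in> A" "s z = t y" "lact y z = w" using AS1[OF y(1) w(1)] y w z_def by auto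
  define r where "r = ract a y"
  have rr: "r = astar b a" using AS3[OF assms(1,2,4)] r_def y_def by simp
  have r: "r \<in> A" "t b = s r" "t r = t y" using sig[OF assms(1) y(1)] y r_def by auto
  have e: "lact b (lact r z) = c" using ybe[OF assms(1) y(1) z(1)] y z w r_def by simp
  have lz: "lact r z \<in> A" "s (lact r z) = t b" using sig[OF r(1) z(1)] r z by auto
  have "astar b c = lact r z" using AS2[OF assms(2) lz(1) lz(2)] e by simp
  moreover have "astar r (lact r z) = z" using AS2[OF r(1) z(1)] r z by simp
  ultimately show ?thesis using rr y_def w_def z_def by simp
qed

end

context YB
begin

abbreviation "Ah \<equiv> compl_arrows V A"
abbreviation "src \<equiv> compl_src s"
abbreviation "tgt \<equiv> compl_tgt t"
definition "cop = compl_op s t (yb_star A s t lact)"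
definition "tst x y = the (cop x y)"

lemma ybstar_eq: "yb_star A s t lact a b = (if s a = s b then Some (astar a b) else None)"
  unfolding yb_star_def astar_def by simp

lemma Ah_cases: "x \<in> Ah \<Longrightarrow> (\<And>a. x = Inl a \<Longrightarrow> a \<in> A \<Longrightarrow> P) \<Longrightarrow> (\<And>v. x = Inr v \<Longrightarrow> v \<in> V \<Longrightarrow> P) \<Longrightarrow> P"
  unfolding compl_arrows_def by blast

lemma Inl_Ah[simp]: "Inl a \<in> Ah \<longleftrightarrow> a \<in> A" unfolding compl_arrows_def by auto
lemma Inr_Ah[simp]: "Inr v \<in> Ah \<longleftrightarrow> v \<in> V" unfolding compl_arrows_def by auto

lemma src_V: "x \<in> Ah \<Longrightarrow> src x \<in> V \<and> tgt x \<in> V"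
  by (erule Ah_cases) (auto dest: st_V)

lemma cop_some: "x \<in> Ah \<Longrightarrow> y \<in> Ah \<Longrightarrow> src x = src y \<Longrightarrow> cop x y = Some (tst x y)"
  unfolding tst_def cop_def compl_op_def
  by (erule Ah_cases; erule Ah_cases) (auto simp: ybstar_eq)

lemma T1: "src y = v \<Longrightarrow> tst (Inr v) y = y"
  unfolding tst_def cop_def compl_op_def by auto

lemma T2: "src x = v \<Longrightarrow> tst x (Inr v) = Inr (tgt x)"
  unfolding tst_def cop_def compl_op_def by (cases x) auto

lemma T3: "tst (Inl a) (Inl a) = Inr (t a)"
  unfolding tst_def cop_def compl_op_def by auto

lemma T4: "a \<noteq> b \<Longrightarrow> s a = s b \<Longrightarrow> tst (Inl a) (Inl b) = Inl (astar a b)"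
  unfolding tst_def cop_def compl_op_def by (auto simp: ybstar_eq)

lemma T5: "x \<in> Ah \<Longrightarrow> tst x x = Inr (tgt x)"
  by (erule Ah_cases) (auto simp: T3 T2)

lemma E1: assumes "x \<in> Ah" "y \<in> Ah" "src x = src y"
  shows "tst x y \<in> Ah \<and> src (tst x y) = tgt x \<and> tgt (tst x y) = tgt (tst y x)"
  using assms
proof (cases rule: Ah_cases[OF assms(1)])
  case (1 a)
  then show ?thesis
  proof (cases rule: Ah_cases[OF assms(2)])
    case (1 b)
    show ?thesis
    proof (cases "a = b")
      case True then show ?thesis using 1 \<open>x = Inl a\<close> \<open>a \<in> A\<close> by (auto simp: T3 st_V)
    next
      case False
      then show ?thesis using 1 \<open>x = Inl a\<close> \<open>a \<in> A\<close> assms(3)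
        by (auto simp: T4 AS1 AS4)
    qed
  next
    case (2 v)
    then show ?thesis using \<open>x = Inl a\<close> \<open>a \<in> A\<close> assms(3)
      by (auto simp: T1 T2 st_V)
  qed
next
  case (2 v)
  then show ?thesis using assms by (auto simp: T1 T2 src_V)
qed

lemma RC: assumes "x \<in> Ah" "y \<in> Ah" "z \<in> Ah" "src x = src y" "src x = src z"
  shows "tst (tst x y) (tst x z) = tst (tst y x) (tst y z)"
proof -
  have e1: "src (tst y z) = tgt y" "src (tst x y) = tgt x" "src (tst x z) = tgt x"
      "tgt (tst x y) = tgt (tst y x)" "src (tst y x) = tgt y"
    using E1 assms by auto
  show ?thesis
  proof (cases x)
    case (Inr v)
    then show ?thesis using assms e1 by (simp add: T1 T2)
  next
    case (Inl a)
    show ?thesis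
    proof (cases y)
      case (Inr w)
      then show ?thesis using assms e1 Inl by (simp add: T1 T2)
    next
      case (Inl b)
      show ?thesis
      proof (cases z)
        case (Inr u)
        then show ?thesis using assms e1 by (simp add: T1 T2)
      next
        case (Inl c)
        have abc: "a \<in> A" "b \<in> A" "c \<in> A" "s a = s b" "s a = s c"
          using assms \<open>x = Inl a\<close> \<open>y = Inl b\<close> Inl by auto
        show ?thesis
        proof (cases "a = b")
          case True then show ?thesis using \<open>x = Inl a\<close> \<open>y = Inl b\<close> by simp
        next
          case ab: False
          show ?thesis
          proof (cases "a = c")
            case True
            then show ?thesis using ab abc \<open>x = Inl a\<close> \<open>y = Inl b\<close> Inl
              by (simp add: T4 T2 T3 AS1 AS4)
          next
            case ac: False
            show ?thesis
            proof (cases "b = c")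
              case True
              then show ?thesis using ab abc \<open>x = Inl a\<close> \<open>y = Inl b\<close> Inl
                by (simp add: T4 T2 T3 AS1 AS4)
            next
              case bc: False
              have d1: "astar a b \<noteq> astar a c" using AS_inj abc bc by metis
              have d2: "astar b a \<noteq> astar b c" using AS_inj abc ac by metis
              show ?thesis using ab ac bc abc d1 d2 \<open>x = Inl a\<close> \<open>y = Inl b\<close> Inl
                by (simp add: T4 AS1 AS5)
            qed
          qed
        qed
      qed
    qed
  qed
qed

end

fun gcol :: "('b \<Rightarrow> 'b \<Rightarrow> 'b) \<Rightarrow> 'b \<Rightarrow> 'b list \<Rightarrow> 'b list" where
  "gcol f x [] = []"
| "gcol f x (b # bs) = f x b # gcol f (f b x) bs"

fun gbot :: "('b \<Rightarrow> 'b \<Rightarrow> 'b) \<Rightarrow> 'b \<Rightarrow> 'b list \<Rightarrow> 'b" where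
  "gbot f x [] = x"
| "gbot f x (b # bs) = gbot f (f b x) bs"

fun gpst :: "('b \<Rightarrow> 'b \<Rightarrow> 'b) \<Rightarrow> 'b list \<Rightarrow> 'b list \<Rightarrow> 'b list" where
  "gpst f [] bs = bs"
| "gpst f (a # as) bs = gpst f as (gcol f a bs)"

lemma gcol_append: "gcol f x (bs @ cs) = gcol f x bs @ gcol f (gbot f x bs) cs"
  by (induction bs arbitrary: x) auto

lemma gbot_append: "gbot f x (bs @ cs) = gbot f (gbot f x bs) cs"
  by (induction bs arbitrary: x) auto

lemma gcol_length[simp]: "length (gcol f x bs) = length bs"
  by (induction bs arbitrary: x) auto

lemma gpst_length[simp]: "length (gpst f as bs) = length bs"
  by (induction as arbitrary: bs) auto

lemma gpst_nil2[simp]: "gpst f as [] = []"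
  by (induction as) auto

lemma gpst_append1: "gpst f (as @ as') bs = gpst f as' (gpst f as bs)"
  by (induction as arbitrary: bs) auto

lemma gpst_cons2: "gpst f bs (a # as) = gbot f a bs # gpst f (gcol f a bs) as"
  by (induction bs arbitrary: a as) auto

lemma gpst_append2: "gpst f as (bs @ bs') = gpst f as bs @ gpst f (gpst f bs as) bs'"
proof (induction as arbitrary: bs bs')
  case Nil
  then show ?case by simp
next
  case (Cons a as)
  have "gpst f (a # as) (bs @ bs') = gpst f as (gcol f a bs @ gcol f (gbot f a bs) bs')"
    by (simp add: gcol_append)
  also have "\<dots> = gpst f as (gcol f a bs) @ gpst f (gpst f (gcol f a bs) as) (gcol f (gbot f a bs) bs')"
    using Cons by simp
  also have "\<dots> = gpst f (a # as) bs @ gpst f (gpst f bs (a # as)) bs'"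
    by (simp add: gpst_cons2)
  finally show ?case .
qed

context YB
begin

abbreviation "col \<equiv> gcol tst"
abbreviation "gbt \<equiv> gbot tst"
abbreviation "pst \<equiv> gpst tst"

definition pv :: "'v \<Rightarrow> ('a + 'v) list \<Rightarrow> bool" where
  "pv v xs \<longleftrightarrow> set xs \<subseteq> Ah \<and> path_ok src tgt v xs"

abbreviation "ptg \<equiv> ptgt tgt"

lemma pv_Nil[simp]: "pv v []" unfolding pv_def by simp
lemma pv_Cons[simp]: "pv v (x # xs) \<longleftrightarrow> x \<in> Ah \<and> src x = v \<and> pv (tgt x) xs"
  unfolding pv_def by auto
lemma pv_append[simp]: "pv v (xs @ ys) \<longleftrightarrow> pv v xs \<and> pv (ptg v xs) ys"
  by (induction xs arbitrary: v) auto
lemma ptg_append[simp]: "ptg v (xs @ ys) = ptg (ptg v xs) ys"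
  by (induction xs arbitrary: v) auto

lemma col_valid:
  assumes "x \<in> Ah" "pv (src x) bs"
  shows "pv (tgt x) (col x bs) \<and> gbt x bs \<in> Ah \<and> src (gbt x bs) = ptg (src x) bs
     \<and> tgt (gbt x bs) = ptg (tgt x) (col x bs)"
  using assms
proof (induction bs arbitrary: x)
  case Nil
  then show ?case by simp
next
  case (Cons b bs)
  have e: "tst x b \<in> Ah" "src (tst x b) = tgt x" "tgt (tst x b) = tgt (tst b x)"
     "tst b x \<in> Ah" "src (tst b x) = tgt b"
    using E1[of x b] E1[of b x] Cons.prems by auto
  have ih: "pv (tgt (tst b x)) (col (tst b x) bs) \<and> gbt (tst b x) bs \<in> Ah \<and>
       src (gbt (tst b x) bs) = ptg (src (tst b x)) bs \<and>
       tgt (gbt (tst b x) bs) = ptg (tgt (tst b x)) (col (tst b x) bs)"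
    using Cons.IH[of "tst b x"] e Cons.prems by auto
  show ?case using ih e Cons.prems by auto
qed

lemma pst_valid:
  assumes "pv v as" "pv v bs"
  shows "pv (ptg v as) (pst as bs) \<and> ptg (ptg v as) (pst as bs) = ptg (ptg v bs) (pst bs as)"
  using assms
proof (induction as arbitrary: v bs)
  case Nil
  then show ?case by simp
next
  case (Cons a as)
  have c: "pv (tgt a) (col a bs) \<and> gbt a bs \<in> Ah \<and> src (gbt a bs) = ptg (src a) bs
     \<and> tgt (gbt a bs) = ptg (tgt a) (col a bs)" using col_valid[of a bs] Cons.prems by auto
  have ih: "pv (ptg (tgt a) as) (pst as (col a bs)) \<and>
     ptg (ptg (tgt a) as) (pst as (col a bs)) = ptg (ptg (tgt a) (col a bs)) (pst (col a bs) as)"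
    using Cons.IH[of "tgt a" "col a bs"] c Cons.prems by auto
  show ?case using ih c Cons.prems by (simp add: gpst_cons2)
qed

lemma pst_pv: "pv v as \<Longrightarrow> pv v bs \<Longrightarrow> pv (ptg v as) (pst as bs)"
  using pst_valid by blast

lemma corner: "pv v as \<Longrightarrow> pv v bs \<Longrightarrow> ptg (ptg v as) (pst as bs) = ptg (ptg v bs) (pst bs as)"
  using pst_valid by blast

definition isE :: "('a + 'v) list \<Rightarrow> bool" where
  "isE xs \<longleftrightarrow> set xs \<subseteq> range Inr"

lemma isE_simps[simp]: "isE []" "isE (x # xs) \<longleftrightarrow> x \<in> range Inr \<and> isE xs"
  "isE (xs @ ys) \<longleftrightarrow> isE xs \<and> isE ys"
  unfolding isE_def by auto

lemma E_ptg: "pv v es \<Longrightarrow> isE es \<Longrightarrow> ptg v es = v"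
  by (induction es arbitrary: v) auto

lemma col_E: "x \<in> Ah \<Longrightarrow> pv (src x) es \<Longrightarrow> isE es \<Longrightarrow> isE (col x es) \<and> gbt x es = x"
proof (induction es arbitrary: x)
  case Nil
  then show ?case by simp
next
  case (Cons e es)
  then obtain w where w: "e = Inr w" by auto
  then have "tst x e = Inr (tgt x)" "tst e x = x" using Cons.prems by (auto simp: T1 T2)
  then show ?case using Cons w by auto
qed

lemma pst_E: "pv v as \<Longrightarrow> pv v es \<Longrightarrow> isE es \<Longrightarrow> isE (pst as es)"
proof (induction as arbitrary: v es)
  case Nil
  then show ?case by simp
next
  case (Cons a as)
  have "isE (col a es)" "pv (tgt a) (col a es)" using col_E[of a es] col_valid[of a es] Cons.prems by auto
  then show ?case using Cons by auto
qed

lemma col_E1: "pv v bs \<Longrightarrow> col (Inr v) bs = bs \<and> gbt (Inr v) bs = Inr (ptg v bs)"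
proof (induction bs arbitrary: v)
  case Nil
  then show ?case by simp
next
  case (Cons b bs)
  then have "tst (Inr v) b = b" "tst b (Inr v) = Inr (tgt b)" by (auto simp: T1 T2)
  then show ?case using Cons by auto
qed

lemma pst_E1: "pv v es \<Longrightarrow> isE es \<Longrightarrow> pv v bs \<Longrightarrow> pst es bs = bs"
proof (induction es arbitrary: v bs)
  case Nil
  then show ?case by simp
next
  case (Cons e es)
  then obtain w where w: "e = Inr w" by auto
  then have "w = v" "tgt e = v" using Cons.prems by auto
  then show ?case using Cons w col_E1[of v bs] by auto
qed

lemma RC1: "x \<in> Ah \<Longrightarrow> y \<in> Ah \<Longrightarrow> src x = src y \<Longrightarrow> pv (src x) cs \<Longrightarrow>
   col (tst x y) (col x cs) = col (tst y x) (col y cs)"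
proof (induction cs arbitrary: x y)
  case Nil
  then show ?case by simp
next
  case (Cons c cs)
  have e: "tst c x \<in> Ah" "tst c y \<in> Ah" "src (tst c x) = tgt c" "src (tst c y) = tgt c"
    using E1[of c x] E1[of c y] Cons.prems by auto
  have ih: "col (tst (tst c x) (tst c y)) (col (tst c x) cs) = col (tst (tst c y) (tst c x)) (col (tst c y) cs)"
    using Cons.IH[of "tst c x" "tst c y"] e Cons.prems by auto
  have r1: "tst (tst x y) (tst x c) = tst (tst y x) (tst y c)" using Cons.prems by (intro RC) auto
  have r2: "tst (tst x c) (tst x y) = tst (tst c x) (tst c y)" using Cons.prems by (intro RC) auto
  have r3: "tst (tst y c) (tst y x) = tst (tst c y) (tst c x)" using Cons.prems by (intro RC) auto
  show ?case using ih r1 r2 r3 by simp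
qed

lemma RC2: "x \<in> Ah \<Longrightarrow> pv (src x) bs \<Longrightarrow> pv (src x) cs \<Longrightarrow>
   pst (col x bs) (col x cs) = pst [gbt x bs] (pst bs cs)"
proof (induction bs arbitrary: x cs)
  case Nil
  then show ?case by simp
next
  case (Cons b bs)
  have e: "tst b x \<in> Ah" "src (tst b x) = tgt b" using E1[of b x] Cons.prems by auto
  have cv: "pv (tgt b) (col b cs)" using col_valid[of b cs] Cons.prems by auto
  have "pst (col x (b # bs)) (col x cs) = pst (col (tst b x) bs) (col (tst x b) (col x cs))"
    by simp
  also have "\<dots> = pst (col (tst b x) bs) (col (tst b x) (col b cs))"
    using RC1[of x b cs] Cons.prems by (simp only: pv_Cons)
  also have "\<dots> = pst [gbt (tst b x) bs] (pst bs (col b cs))"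
    using Cons.IH[of "tst b x" "col b cs"] e cv Cons.prems by simp
  finally show ?case by simp
qed

lemma RCp: "pv v as \<Longrightarrow> pv v bs \<Longrightarrow> pv v cs \<Longrightarrow>
   pst (pst as bs) (pst as cs) = pst (pst bs as) (pst bs cs)"
proof (induction as arbitrary: v bs cs)
  case Nil
  then show ?case by simp
next
  case (Cons a as)
  have cv: "pv (tgt a) (col a bs)" "pv (tgt a) (col a cs)"
    using col_valid[of a bs] col_valid[of a cs] Cons.prems by auto
  have "pst (pst (a # as) bs) (pst (a # as) cs) = pst (pst as (col a bs)) (pst as (col a cs))" by simp
  also have "\<dots> = pst (pst (col a bs) as) (pst (col a bs) (col a cs))"
    using Cons.IH[of "tgt a"] cv Cons.prems by simp
  also have "\<dots> = pst (pst (col a bs) as) (pst [gbt a bs] (pst bs cs))"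
    using RC2[of a bs cs] Cons.prems by simp
  also have "\<dots> = pst (pst bs (a # as)) (pst bs cs)"
    by (simp only: gpst_cons2 gpst.simps)
  finally show ?case .
qed

end

context YB
begin

definition req :: "('a + 'v) list \<Rightarrow> ('a + 'v) list \<Rightarrow> bool" where
  "req as bs \<longleftrightarrow> isE (pst as bs) \<and> isE (pst bs as)"

lemma Q1: "pv v as \<Longrightarrow> isE (pst as as)"
proof (induction as arbitrary: v)
  case Nil
  then show ?case by simp
next
  case (Cons a as)
  have ta: "tst a a = Inr (tgt a)" using T5 Cons.prems by auto
  have c: "col (Inr (tgt a)) as = as \<and> gbt (Inr (tgt a)) as = Inr (ptg (tgt a) as)"
    using col_E1[of "tgt a" as] Cons.prems by auto
  have "pst (a # as) (a # as) = Inr (ptg (tgt a) as) # pst as as"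
    using ta c by (simp add: gpst_cons2)
  then show ?case using Cons by auto
qed

lemma Q3: "pv v as \<Longrightarrow> pv v bs \<Longrightarrow> req as bs \<Longrightarrow> ptg v as = ptg v bs"
  using corner[of v as bs] pst_pv[of v as bs] pst_pv[of v bs as] E_ptg unfolding req_def by metis

lemma Q2: assumes "pv v as" "pv v bs" "pv v cs" "req as bs" "req bs cs"
  shows "req as cs"
proof -
  have 1: "pst as cs = pst (pst as bs) (pst as cs)"
    using pst_E1[of "ptg v as" "pst as bs" "pst as cs"] assms pst_pv unfolding req_def by auto
  have 2: "pst (pst bs as) (pst bs cs) = pst bs cs"
    using pst_E1[of "ptg v bs" "pst bs as" "pst bs cs"] assms pst_pv unfolding req_def by auto
  have 3: "pst cs as = pst (pst cs bs) (pst cs as)"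
    using pst_E1[of "ptg v cs" "pst cs bs" "pst cs as"] assms pst_pv unfolding req_def by auto
  have 4: "pst (pst bs cs) (pst bs as) = pst bs as"
    using pst_E1[of "ptg v bs" "pst bs cs" "pst bs as"] assms pst_pv unfolding req_def by auto
  have "isE (pst as cs)" using 1 2 RCp[of v as bs cs] assms unfolding req_def by simp
  moreover have "isE (pst cs as)" using 3 4 RCp[of v cs bs as] assms unfolding req_def by simp
  ultimately show ?thesis unfolding req_def by simp
qed

lemma req_sym: "req as bs \<Longrightarrow> req bs as" unfolding req_def by simp
lemma req_refl: "pv v as \<Longrightarrow> req as as" unfolding req_def using Q1 by blast

lemma Q4a: assumes "pv v as" "pv v bs" "req as bs" "pv (ptg v as) cs"
  shows "isE (pst (as @ cs) (bs @ cs))"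
proof -
  have tg: "ptg v as = ptg v bs" using Q3 assms by blast
  define X where "X = pst as bs"
  have X: "pv (ptg v as) X" "isE X" using pst_pv assms X_def unfolding req_def by auto
  have Y: "pv (ptg v bs) (pst bs as)" "isE (pst bs as)" using pst_pv assms unfolding req_def by auto
  have "pst (as @ cs) (bs @ cs) = pst cs (X @ pst (pst bs as) cs)"
    by (simp add: gpst_append1 gpst_append2 X_def)
  also have "\<dots> = pst cs (X @ cs)" using pst_E1[OF Y] assms tg by simp
  also have "\<dots> = pst cs X @ pst cs cs" using pst_E1[OF X] assms by (simp add: gpst_append2)
  finally show ?thesis using pst_E[of "ptg v as" cs X] X Q1[of _ cs] assms by auto
qed

lemma Q4: assumes "pv v as" "pv v bs" "req as bs" "pv (ptg v as) cs"
  shows "req (as @ cs) (bs @ cs)"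
proof -
  have tg: "ptg v as = ptg v bs" using Q3 assms by blast
  show ?thesis using Q4a[OF assms] Q4a[of v bs as cs] assms tg req_sym unfolding req_def by auto
qed

lemma Q5a: assumes "pv v cs" "pv (ptg v cs) as" "pv (ptg v cs) bs" "req as bs"
  shows "isE (pst (cs @ as) (cs @ bs))"
proof -
  define E where "E = pst cs cs"
  have E: "pv (ptg v cs) E" "isE E" using pst_pv Q1 assms E_def by auto
  have "pst (cs @ as) (cs @ bs) = pst as (E @ pst E bs)"
    by (simp add: gpst_append1 gpst_append2 E_def)
  also have "\<dots> = pst as (E @ bs)" using pst_E1[OF E] assms by simp
  also have "\<dots> = pst as E @ pst as bs" using pst_E1[OF E] assms by (simp add: gpst_append2)
  finally show ?thesis using pst_E[of "ptg v cs" as E] E assms unfolding req_def by auto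
qed

lemma Q5: assumes "pv v cs" "pv (ptg v cs) as" "pv (ptg v cs) bs" "req as bs"
  shows "req (cs @ as) (cs @ bs)"
  using Q5a[OF assms] Q5a[of v cs bs as] assms req_sym unfolding req_def by auto

lemma Q7a: assumes "pv v as" "pv v bs"
  shows "isE (pst (as @ pst as bs) (bs @ pst bs as))"
proof -
  define X where "X = pst as bs"
  define Y where "Y = pst bs as"
  have X: "pv (ptg v as) X" using pst_pv assms X_def by auto
  have Y: "pv (ptg v bs) Y" using pst_pv assms Y_def by auto
  have c: "ptg (ptg v as) X = ptg (ptg v bs) Y" using corner assms X_def Y_def by auto
  have XX: "pv (ptg (ptg v as) X) (pst X X)" "isE (pst X X)" using pst_pv[OF X X] Q1[OF X] by auto
  have YY: "pv (ptg (ptg v as) X) (pst Y Y)" "isE (pst Y Y)" using pst_pv[OF Y Y] Q1[OF Y] c by auto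
  have "pst (as @ X) (bs @ Y) = pst X X @ pst (pst X X) (pst Y Y)"
    by (simp add: gpst_append1 gpst_append2 X_def Y_def)
  then show ?thesis using pst_E[OF XX(1) YY(1) YY(2)] XX(2) X_def Y_def by simp
qed

lemma Q7: assumes "pv v as" "pv v bs"
  shows "req (as @ pst as bs) (bs @ pst bs as)"
  using Q7a[OF assms] Q7a[OF assms(2,1)] unfolding req_def by auto

lemma Q6: assumes "pv v (as @ [Inr w] @ bs)"
  shows "req (as @ [Inr w] @ bs) (as @ bs)"
proof -
  have w: "ptg v as = w" "w \<in> V" using assms by auto
  have r0: "req [Inr w] []" unfolding req_def by simp
  have "req ([Inr w] @ bs) ([] @ bs)"
    using Q4[of w "[Inr w]" "[]" bs] r0 assms w by auto
  then show ?thesis using Q5[of v as "[Inr w] @ bs" bs] assms w by auto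
qed

end

lemma path_ok_append[simp]: "path_ok s t v (xs @ ys) \<longleftrightarrow> path_ok s t v xs \<and> path_ok s t (ptgt t v xs) ys"
  by (induction xs arbitrary: v) auto

lemma ptgt_append[simp]: "ptgt t v (xs @ ys) = ptgt t (ptgt t v xs) ys"
  by (induction xs arbitrary: v) auto

fun strp :: "('a + 'v) list \<Rightarrow> 'a list" where
  "strp [] = []"
| "strp (Inl a # xs) = a # strp xs"
| "strp (Inr v # xs) = strp xs"

lemma strp_append[simp]: "strp (xs @ ys) = strp xs @ strp ys"
  by (induction xs rule: strp.induct) auto

lemma strp_E: "set xs \<subseteq> range Inr \<Longrightarrow> strp xs = []"
  by (induction xs rule: strp.induct) auto

lemma strp_emb[simp]: "strp (map Inl xs) = xs"
  by (induction xs) auto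

context YB
begin

abbreviation "P2 \<equiv> Paths V A s t"
abbreviation "stp \<equiv> yb_step V A s t lact ract"
abbreviation "EE \<equiv> equivclp stp"

lemma P2_iff: "(v, xs) \<in> P2 \<longleftrightarrow> v \<in> V \<and> set xs \<subseteq> A \<and> path_ok s t v xs"
  unfolding Paths_def by auto

lemma sig_path: "path_ok s t v (u @ [x, y] @ w) \<Longrightarrow> set (u @ [x, y] @ w) \<subseteq> A \<Longrightarrow>
   path_ok s t v (u @ [lact x y, ract x y] @ w) \<and> set (u @ [lact x y, ract x y] @ w) \<subseteq> A
   \<and> ptgt t v (u @ [lact x y, ract x y] @ w) = ptgt t v (u @ [x, y] @ w)"
  using sig[of x y] by auto

lemma stp_inv: "stp p q \<Longrightarrow> p \<in> P2 \<and> q \<in> P2 \<and> fst q = fst p \<and> ptgt t (fst q) (snd q) = ptgt t (fst p) (snd p)"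
  unfolding yb_step_def using sig_path by (auto simp: P2_iff)

lemma EE_inv: "EE p q \<Longrightarrow> p \<in> P2 \<Longrightarrow> q \<in> P2 \<and> fst q = fst p \<and> ptgt t (fst q) (snd q) = ptgt t (fst p) (snd p)"
  by (induction rule: equivclp_induct) (auto dest: stp_inv)

lemma EE_fst: "EE p q \<Longrightarrow> fst q = fst p"
  by (induction rule: equivclp_induct) (auto dest: stp_inv)

lemma stp_ctx: assumes "stp (w, ys) (w', ys')" "(u, ws @ ys @ zs) \<in> P2"
  shows "stp (u, ws @ ys @ zs) (u, ws @ ys' @ zs)"
proof -
  obtain uu x y ww where e: "ys = uu @ [x, y] @ ww" "ys' = uu @ [lact x y, ract x y] @ ww"
    using assms(1) unfolding yb_step_def by auto
  show ?thesis unfolding yb_step_def using assms(2) e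
    by (intro conjI exI[of _ u] exI[of _ "ws @ uu"] exI[of _ x] exI[of _ y] exI[of _ "ww @ zs"]) auto
qed

lemma ctx: assumes "EE (w, xs) (w, ys)" "(w, xs) \<in> P2" "(u, ws @ xs @ zs) \<in> P2" "ptgt t u ws = w"
  shows "EE (u, ws @ xs @ zs) (u, ws @ ys @ zs)"
proof -
  have "\<forall>q. EE (w, xs) q \<longrightarrow> EE (u, ws @ xs @ zs) (u, ws @ snd q @ zs)"
  proof (intro allI impI)
    fix q assume "EE (w, xs) q"
    then show "EE (u, ws @ xs @ zs) (u, ws @ snd q @ zs)"
    proof (induction rule: equivclp_induct)
      case base
      then show ?case by simp
    next
      case (step y z)
      have iy: "y \<in> P2" "fst y = w" "ptgt t (fst y) (snd y) = ptgt t w xs"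
        using EE_inv[OF step.hyps(1) assms(2)] by auto
      have iz: "z \<in> P2" "fst z = w" "ptgt t (fst z) (snd z) = ptgt t w xs"
        using step.hyps(2) iy by (auto dest: stp_inv)
      have py: "(u, ws @ snd y @ zs) \<in> P2" using assms(3,4) iy by (cases y) (auto simp: P2_iff)
      have pz: "(u, ws @ snd z @ zs) \<in> P2" using assms(3,4) iz by (cases z) (auto simp: P2_iff)
      have "stp (u, ws @ snd y @ zs) (u, ws @ snd z @ zs) \<or> stp (u, ws @ snd z @ zs) (u, ws @ snd y @ zs)"
        using step.hyps(2) py pz stp_ctx by (cases y, cases z) auto
      then show ?case using step.IH equivclp_into_equivclp by metis
    qed
  qed
  then show ?thesis using assms(1) by auto
qed

lemma strp_valid: "pv v xs \<Longrightarrow> set (strp xs) \<subseteq> A \<and> path_ok s t v (strp xs) \<and> ptgt t v (strp xs) = ptg v xs"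
proof (induction xs arbitrary: v rule: strp.induct)
  case 1
  then show ?case by simp
next
  case (2 a xs)
  then show ?case by auto
next
  case (3 w xs)
  then show ?case by auto
qed

lemma strp_P2: "pv v xs \<Longrightarrow> v \<in> V \<Longrightarrow> (v, strp xs) \<in> P2"
  using strp_valid by (auto simp: P2_iff)

lemma square: assumes "x \<in> Ah" "y \<in> Ah" "src x = v" "src y = v" "v \<in> V"
  shows "EE (v, strp [x, tst x y]) (v, strp [y, tst y x])"
proof (cases x)
  case (Inr w)
  then show ?thesis using assms by (cases y) (simp_all add: T1 T2)
next
  case (Inl a)
  show ?thesis
  proof (cases y)
    case (Inr w)
    then show ?thesis using assms Inl by (cases x) (simp_all add: T1 T2)
  next
    case (Inl b)
    show ?thesis
    proof (cases "a = b")
      case True then show ?thesis using Inl \<open>x = Inl a\<close> by simp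
    next
      case False
      have ab: "a \<in> A" "b \<in> A" "s a = v" "s b = v" using assms Inl \<open>x = Inl a\<close> by auto
      have y1: "astar a b \<in> A" "s (astar a b) = t a" "lact a (astar a b) = b"
        using AS1[of a b] ab by auto
      have r: "ract a (astar a b) = astar b a" using AS3[of a b] ab by auto
      have ba: "b \<noteq> a" using False by simp
      have "stp (v, [a, astar a b]) (v, [b, astar b a])"
        unfolding yb_step_def P2_iff using ab y1 r assms(5)
        by (auto intro!: exI[of _ "[]"])
      then show ?thesis using False ba ab Inl \<open>x = Inl a\<close> by (simp add: T4 r_into_equivclp)
    qed
  qed
qed

lemma row: assumes "x \<in> Ah" "pv (src x) bs"
  shows "EE (src x, strp (x # col x bs)) (src x, strp (bs @ [gbt x bs]))"
  using assms
proof (induction bs arbitrary: x)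
  case Nil
  then show ?case by simp
next
  case (Cons b bs)
  define v where "v = src x"
  have vV: "v \<in> V" using src_V Cons.prems v_def by blast
  have e: "tst x b \<in> Ah" "src (tst x b) = tgt x" "tst b x \<in> Ah" "src (tst b x) = tgt b"
    using E1[of x b] E1[of b x] Cons.prems by auto
  have cv: "pv (tgt x) (col x (b # bs))" using col_valid[of x "b # bs"] Cons.prems by auto
  have cv2: "pv (tgt (tst b x)) (col (tst b x) bs)" using col_valid[of "tst b x" bs] e Cons.prems by auto
  have sq: "EE (v, strp [x, tst x b]) (v, strp [b, tst b x])"
    using square[of x b v] Cons.prems v_def vV by auto
  have eq1: "strp [x, tst x b] @ strp (col (tst b x) bs) @ [] = strp (x # col x (b # bs))"
    by (simp only: strp_append[symmetric] append.simps gcol.simps append_Nil2)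
  have p1: "(v, strp [x, tst x b] @ strp (col (tst b x) bs) @ []) \<in> P2"
    unfolding eq1 using strp_P2[of v "x # col x (b # bs)"] cv Cons.prems v_def vV by simp
  have s1: "EE (v, strp [x, tst x b] @ strp (col (tst b x) bs))
                (v, strp [b, tst b x] @ strp (col (tst b x) bs))"
    using ctx[OF sq _ _, of v "[]" "strp (col (tst b x) bs)"] p1 strp_P2[of v "[x, tst x b]"] e Cons.prems v_def vV
    by simp
  have ih: "EE (tgt b, strp (tst b x # col (tst b x) bs)) (tgt b, strp (bs @ [gbt (tst b x) bs]))"
    using Cons.IH[of "tst b x"] e Cons.prems by auto
  have tb: "ptgt t v (strp [b]) = tgt b" using strp_valid[of v "[b]"] Cons.prems v_def by auto
  have vtb: "tgt b \<in> V" using src_V Cons.prems by auto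
  have eq2: "strp [b] @ strp (tst b x # col (tst b x) bs) @ [] = strp (b # tst b x # col (tst b x) bs)"
    by (simp only: strp_append[symmetric] append.simps append_Nil2)
  have p2: "(v, strp [b] @ strp (tst b x # col (tst b x) bs) @ []) \<in> P2"
    unfolding eq2 using strp_P2[of v "b # tst b x # col (tst b x) bs"] Cons.prems v_def vV e cv2 by simp
  have s2: "EE (v, strp [b] @ strp (tst b x # col (tst b x) bs))
                (v, strp [b] @ strp (bs @ [gbt (tst b x) bs]))"
    using ctx[OF ih _ p2 tb] strp_P2[of "tgt b" "tst b x # col (tst b x) bs"] e cv2 vtb by simp
  have "EE (v, strp (x # col x (b # bs))) (v, strp ((b # bs) @ [gbt x (b # bs)]))"
    using s1 s2 equivclp_trans by (simp add: strp_append[symmetric] del: strp_append)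
  then show ?case using v_def by simp
qed

end

context YB
begin

lemma grid: "pv v as \<Longrightarrow> pv v bs \<Longrightarrow> v \<in> V \<Longrightarrow>
   EE (v, strp (as @ pst as bs)) (v, strp (bs @ pst bs as))"
proof (induction as arbitrary: v bs)
  case Nil
  then show ?case by simp
next
  case (Cons a as)
  let ?C = "col a bs"
  let ?Z = "strp (pst ?C as)"
  have a: "a \<in> Ah" "src a = v" "pv (tgt a) as" using Cons.prems by auto
  have ta: "tgt a \<in> V" using src_V a by blast
  have c: "pv (tgt a) ?C" "gbt a bs \<in> Ah" using col_valid[of a bs] Cons.prems by auto
  have ih: "EE (tgt a, strp (as @ pst as ?C)) (tgt a, strp (?C @ pst ?C as))"
    using Cons.IH[OF a(3) c(1) ta] .
  have v1: "pv (tgt a) (as @ pst as ?C)" using a(3) pst_pv[OF a(3) c(1)] by (simp only: pv_append simp_thms)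
  have v2: "pv v (a # ?C @ pst ?C as)" using a c(1) pst_pv[OF c(1) a(3)] by (simp only: pv_append pv_Cons simp_thms)
  have tb: "ptgt t v (strp [a]) = tgt a" using strp_valid[of v "[a]"] a by auto
  have e1: "strp [a] @ strp (as @ pst as ?C) @ [] = strp ((a # as) @ pst (a # as) bs)"
    by (cases a) auto
  have e2: "strp [a] @ strp (?C @ pst ?C as) @ [] = [] @ strp (a # ?C) @ ?Z"
    by (cases a) auto
  have e3: "[] @ strp (bs @ [gbt a bs]) @ ?Z = strp (bs @ pst bs (a # as))"
    by (simp add: gpst_cons2) (cases "gbt a bs"; simp)
  have p1: "(v, strp [a] @ strp (as @ pst as ?C) @ []) \<in> P2"
    unfolding e1 using strp_P2[of v "(a # as) @ pst (a # as) bs"] v1 a Cons.prems by simp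
  have s1: "EE (v, strp [a] @ strp (as @ pst as ?C) @ []) (v, strp [a] @ strp (?C @ pst ?C as) @ [])"
    using ctx[OF ih strp_P2[OF v1 ta] p1 tb] .
  have row1: "EE (v, strp (a # ?C)) (v, strp (bs @ [gbt a bs]))"
    using row[of a bs] a Cons.prems by simp
  have p2: "(v, [] @ strp (a # ?C) @ ?Z) \<in> P2"
    using strp_P2[OF v2 Cons.prems(3)] by (cases a) auto
  have vc: "(v, strp (a # ?C)) \<in> P2" using strp_P2[of v "a # ?C"] a c Cons.prems by simp
  have s2: "EE (v, [] @ strp (a # ?C) @ ?Z) (v, [] @ strp (bs @ [gbt a bs]) @ ?Z)"
    using ctx[OF row1 vc p2] by simp
  have s1': "EE (v, strp ((a # as) @ pst (a # as) bs)) (v, [] @ strp (a # ?C) @ ?Z)"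
    using s1 unfolding e1 e2 .
  have s2': "EE (v, [] @ strp (a # ?C) @ ?Z) (v, strp (bs @ pst bs (a # as)))"
    using s2 unfolding e3 .
  show ?case using equivclp_trans[OF s1' s2'] .
qed

lemma req_EE: "pv v as \<Longrightarrow> pv v bs \<Longrightarrow> v \<in> V \<Longrightarrow> req as bs \<Longrightarrow> EE (v, strp as) (v, strp bs)"
  using grid[of v as bs] strp_E[of "pst as bs"] strp_E[of "pst bs as"] unfolding req_def isE_def by auto

lemma emb_pv: "pv v xs \<Longrightarrow> pv v (map Inl (strp xs)) \<and> ptg v (map Inl (strp xs)) = ptg v xs"
  by (induction xs arbitrary: v rule: strp.induct) auto

lemma D1: "pv v xs \<Longrightarrow> req xs (map Inl (strp xs))"
proof (induction xs arbitrary: v rule: strp.induct)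
  case 1
  then show ?case by (simp add: req_def)
next
  case (2 a xs)
  have "req ([Inl a] @ xs) ([Inl a] @ map Inl (strp xs))"
    using Q5[of v "[Inl a]" xs "map Inl (strp xs)"] 2 emb_pv[of "t a" xs] by auto
  then show ?case by simp
next
  case (3 w xs)
  have w: "w = v" "pv v xs" using 3 by auto
  have "pv v ([] @ [Inr w] @ xs)" using 3(2) by auto
  from Q6[OF this] have r1: "req (Inr w # xs) xs" by simp
  have r2: "req xs (map Inl (strp xs))" using 3 w by auto
  show ?case using Q2[OF 3(2) w(2) _ r1 r2] emb_pv[OF w(2)] by simp
qed

lemma P2_pv0: "set xs \<subseteq> A \<Longrightarrow> path_ok s t v xs \<Longrightarrow> pv v (map Inl xs) \<and> ptg v (map Inl xs) = ptgt t v xs"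
  by (induction xs arbitrary: v) auto

lemma P2_pv: "(v, xs) \<in> P2 \<Longrightarrow> pv v (map Inl xs) \<and> ptg v (map Inl xs) = ptgt t v xs"
  unfolding P2_iff using P2_pv0 by blast

lemma fixpt: assumes "x \<in> A" "y \<in> A" "t x = s y" "lact x y = x" shows "ract x y = y"
proof -
  define r where "r = ract x y"
  have r: "r \<in> A" "s r = t x" using sig[OF assms(1-3)] assms(4) r_def by auto
  have iv: "lact x r = x" using invo[OF assms(1-3)] assms(4) r_def by simp
  have "astar x (lact x y) = y" using AS2[of x y] assms by simp
  moreover have "astar x (lact x r) = r" using AS2[of x r] assms r by simp
  ultimately show ?thesis using iv assms(4) r_def by simp
qed

lemma basic: assumes "stp (v, ys) (w, ys')"
  shows "req (map Inl ys) (map Inl ys')"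
proof -
  obtain uu x y ww where e: "ys = uu @ [x, y] @ ww" "ys' = uu @ [lact x y, ract x y] @ ww"
    and P: "(v, ys) \<in> P2" and w: "w = v"
    using assms unfolding yb_step_def by auto
  have xy: "x \<in> A" "y \<in> A" "t x = s y" "ptgt t v uu = s x" using P e by (auto simp: P2_iff)
  define b where "b = lact x y"
  define r where "r = ract x y"
  show ?thesis
  proof (cases "b = x")
    case True
    then have "r = y" using fixpt xy b_def r_def by auto
    then show ?thesis using e True b_def r_def req_refl P2_pv[OF P] by auto
  next
    case False
    have bb: "b \<in> A" "s b = s x" "r \<in> A" "t b = s r" "t r = t y" using sig[OF xy(1-3)] b_def r_def by auto
    have ay: "astar x b = y" using AS2[of x y] xy b_def by simp
    have ar: "astar b x = r" using AS3[of x b] ay xy bb r_def by simp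
    have q7: "req ([Inl x] @ pst [Inl x] [Inl b]) ([Inl b] @ pst [Inl b] [Inl x])"
      using Q7[of "s x" "[Inl x]" "[Inl b]"] xy bb by simp
    have q: "req [Inl x, Inl y] [Inl b, Inl r]"
      using q7 False bb xy ay ar by (simp add: T4)
    have pw: "pv (t y) (map Inl ww)" using P2_pv[OF P] e by simp
    have q4: "req ([Inl x, Inl y] @ map Inl ww) ([Inl b, Inl r] @ map Inl ww)"
      using Q4[OF _ _ q, of "s x" "map Inl ww"] xy bb pw by simp
    have pu: "pv v (map Inl uu)" "ptg v (map Inl uu) = s x" using P2_pv[OF P] e xy by auto
    have "req (map Inl uu @ [Inl x, Inl y] @ map Inl ww) (map Inl uu @ [Inl b, Inl r] @ map Inl ww)"
      using Q5[OF pu(1), of "[Inl x, Inl y] @ map Inl ww" "[Inl b, Inl r] @ map Inl ww"] q4 pu(2) xy bb pw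
      by simp
    then show ?thesis using e b_def r_def by simp
  qed
qed

lemma D2: assumes "EE (v, xs) q" "(v, xs) \<in> P2"
  shows "req (map Inl xs) (map Inl (snd q))"
  using assms(1)
proof (induction rule: equivclp_induct)
  case base
  then show ?case using req_refl P2_pv[OF assms(2)] by auto
next
  case (step y z)
  have iy: "y \<in> P2" "fst y = v" using EE_inv[OF step.hyps(1) assms(2)] by auto
  have iz: "z \<in> P2" "fst z = v" using step.hyps(2) iy by (auto dest: stp_inv)
  have "stp (fst y, snd y) (fst z, snd z) \<or> stp (fst z, snd z) (fst y, snd y)"
    using step.hyps(2) by simp
  then have r: "req (map Inl (snd y)) (map Inl (snd z))"
    using basic req_sym by blast
  show ?case using Q2[OF _ _ _ step.IH r] P2_pv[OF assms(2)] P2_pv[of v "snd y"] P2_pv[of v "snd z"] iy iz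
    by (cases y, cases z) auto
qed

lemma EE_req: assumes "pv v as" "pv v bs" "v \<in> V" "EE (v, strp as) (v, strp bs)"
  shows "req as bs"
proof -
  have r1: "req as (map Inl (strp as))" using D1 assms by blast
  have r2: "req bs (map Inl (strp bs))" using D1 assms by blast
  have r3: "req (map Inl (strp as)) (map Inl (strp bs))" using D2[OF assms(4)] strp_P2 assms by auto
  have pa: "pv v (map Inl (strp as))" "pv v (map Inl (strp bs))" using emb_pv assms by auto
  have "req as (map Inl (strp bs))" using Q2[OF assms(1) pa r1 r3] .
  then show ?thesis using Q2[OF assms(1) pa(2) assms(2) _ req_sym[OF r2]] by simp
qed

lemma rcol_eq: "x \<in> Ah \<Longrightarrow> pv (src x) bs \<Longrightarrow> rcol cop x bs = Some (col x bs)"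
proof (induction bs arbitrary: x)
  case Nil
  then show ?case by simp
next
  case (Cons b bs)
  have e: "tst b x \<in> Ah" "src (tst b x) = tgt b" using E1[of b x] Cons.prems by auto
  show ?case using Cons.IH[OF e(1)] e Cons.prems cop_some[of x b] cop_some[of b x] by auto
qed

lemma pstar_eq: "pv v as \<Longrightarrow> pv v bs \<Longrightarrow> pstar cop as bs = Some (pst as bs)"
proof (induction as arbitrary: v bs)
  case Nil
  then show ?case by simp
next
  case (Cons a as)
  have c: "pv (tgt a) (col a bs)" using col_valid[of a bs] Cons.prems by auto
  show ?case using Cons.IH[of "tgt a" "col a bs"] c rcol_eq[of a bs] Cons.prems by auto
qed

lemma isE_V: "pv u g \<Longrightarrow> (set g \<subseteq> Inr ` V \<longleftrightarrow> isE g)"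
  unfolding isE_def pv_def compl_arrows_def by blast

abbreviation "P1 \<equiv> Paths V Ah src tgt"

lemma P1_iff: "(v, xs) \<in> P1 \<longleftrightarrow> v \<in> V \<and> pv v xs"
  unfolding Paths_def pv_def by auto

definition strip :: "'v \<times> ('a + 'v) list \<Rightarrow> 'v \<times> 'a list" where
  "strip p = (fst p, strp (snd p))"

lemma KEY: assumes "p \<in> P1" "q \<in> P1"
  shows "rc_equiv V cop Inr p q \<longleftrightarrow> EE (strip p) (strip q)"
proof -
  obtain v as where p: "p = (v, as)" by (cases p)
  obtain w bs where q: "q = (w, bs)" by (cases q)
  have pv: "v \<in> V" "pv v as" "w \<in> V" "pv w bs" using assms p q P1_iff by auto
  show ?thesis
  proof
    assume h: "rc_equiv V cop Inr p q"
    then have vw: "v = w" unfolding rc_equiv_def p q by simp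
    have "req as bs" using h pv vw pstar_eq[of v as bs] pstar_eq[of v bs as]
        isE_V[OF pst_pv[of v as bs]] isE_V[OF pst_pv[of v bs as]]
      unfolding rc_equiv_def req_def p q by auto
    then show "EE (strip p) (strip q)" using req_EE pv vw unfolding strip_def p q by auto
  next
    assume h: "EE (strip p) (strip q)"
    then have vw: "v = w" using EE_fst unfolding strip_def p q by fastforce
    have "req as bs" using EE_req pv vw h unfolding strip_def p q by auto
    then show "rc_equiv V cop Inr p q" using pv vw pstar_eq[of v as bs] pstar_eq[of v bs as]
        isE_V[OF pst_pv[of v as bs]] isE_V[OF pst_pv[of v bs as]]
      unfolding rc_equiv_def req_def p q by auto
  qed
qed

end

context YB
begin

abbreviation "R1 \<equiv> rc_equiv V cop Inr"
abbreviation "cls1 \<equiv> pcls P1 R1"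
abbreviation "cls2 \<equiv> pcls P2 EE"

lemma strip_P2: "p \<in> P1 \<Longrightarrow> strip p \<in> P2"
  unfolding strip_def using strp_P2 by (cases p) (auto simp: P1_iff)

lemma strip_ptg: "p \<in> P1 \<Longrightarrow> ptgt t (fst (strip p)) (snd (strip p)) = ptgt tgt (fst p) (snd p)"
  unfolding strip_def using strp_valid by (cases p) (auto simp: P1_iff)

lemma EE_sym: "EE p q \<Longrightarrow> EE q p" by (rule equivclp_sym)

lemma cls2_eq: "P \<in> P2 \<Longrightarrow> Q \<in> P2 \<Longrightarrow> cls2 P = cls2 Q \<longleftrightarrow> EE P Q"
  unfolding pcls_def by (auto intro: equivclp_trans equivclp_sym)

lemma cls1_alt: "p \<in> P1 \<Longrightarrow> cls1 p = {q \<in> P1. EE (strip p) (strip q)}"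
  unfolding pcls_def using KEY[of p] by blast

lemma cls1_eq: "p \<in> P1 \<Longrightarrow> q \<in> P1 \<Longrightarrow> cls1 p = cls1 q \<longleftrightarrow> EE (strip p) (strip q)"
proof -
  assume a: "p \<in> P1" "q \<in> P1"
  show ?thesis
  proof
    assume "cls1 p = cls1 q"
    then have "q \<in> cls1 p" using a cls1_alt[of q] by auto
    then show "EE (strip p) (strip q)" using cls1_alt[OF a(1)] by auto
  next
    assume h: "EE (strip p) (strip q)"
    show "cls1 p = cls1 q" using a h cls1_alt
      by (auto intro: equivclp_trans equivclp_sym)
  qed
qed

lemma some1: "p \<in> P1 \<Longrightarrow> (SOME x. x \<in> cls1 p) \<in> P1 \<and> EE (strip p) (strip (SOME x. x \<in> cls1 p))"
proof -
  assume a: "p \<in> P1"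
  have "p \<in> cls1 p" using cls1_alt[OF a] a by auto
  then have "(SOME x. x \<in> cls1 p) \<in> cls1 p" by (rule someI)
  then show ?thesis using cls1_alt[OF a] by auto
qed

lemma some2: "P \<in> P2 \<Longrightarrow> (SOME x. x \<in> cls2 P) \<in> P2 \<and> EE P (SOME x. x \<in> cls2 P)"
proof -
  assume a: "P \<in> P2"
  have "P \<in> cls2 P" using a unfolding pcls_def by auto
  then have "(SOME x. x \<in> cls2 P) \<in> cls2 P" by (rule someI)
  then show ?thesis unfolding pcls_def by auto
qed

definition Fm :: "('v \<times> ('a + 'v) list) set \<Rightarrow> ('v \<times> 'a list) set" where
  "Fm X = cls2 (strip (SOME x. x \<in> X))"

lemma Fm_cls: "p \<in> P1 \<Longrightarrow> Fm (cls1 p) = cls2 (strip p)"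
  unfolding Fm_def using some1[of p] cls2_eq strip_P2 EE_sym by metis

lemma EE_cat: assumes "EE (v, xs) (v, ys)" "(v, xs) \<in> P2" "EE (w, zs) (w, us)" "(w, zs) \<in> P2"
    "ptgt t v xs = w"
  shows "EE (v, xs @ zs) (v, ys @ us)"
proof -
  have p1: "(v, [] @ xs @ zs) \<in> P2" using assms(2,4,5) by (auto simp: P2_iff)
  have s1: "EE (v, [] @ xs @ zs) (v, [] @ ys @ zs)" using ctx[OF assms(1,2) p1] by simp
  have iv: "(v, ys) \<in> P2" "ptgt t v ys = w" using EE_inv[OF assms(1,2)] assms(5) by auto
  have p2: "(v, ys @ zs @ []) \<in> P2" using iv assms(4) by (auto simp: P2_iff)
  have s2: "EE (v, ys @ zs @ []) (v, ys @ us @ [])" using ctx[OF assms(3,4) p2 iv(2)] .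
  show ?thesis using equivclp_trans[of _ "(v, xs @ zs)" "(v, ys @ zs)" "(v, ys @ us)"] s1 s2 by simp
qed

lemma strip_simps[simp]: "fst (strip p) = fst p" "snd (strip p) = strp (snd p)"
  unfolding strip_def by auto

lemma main: "cat_iso (rc_struct_cat V Ah src tgt (compl_op s t (yb_star A s t lact)) Inr)
                     (yb_struct_cat V A s t lact ract)"
proof -
  let ?C1 = "rc_struct_cat V Ah src tgt (compl_op s t (yb_star A s t lact)) Inr"
  let ?C2 = "yb_struct_cat V A s t lact ract"
  have C1: "?C1 = path_quot_cat V Ah src tgt R1" unfolding rc_struct_cat_def cop_def by simp
  have C2: "?C2 = path_quot_cat V A s t EE" unfolding yb_struct_cat_def by simp
  have M1: "Mor ?C1 = cls1 ` P1" unfolding C1 path_quot_cat_def by simp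
  have M2: "Mor ?C2 = cls2 ` P2" unfolding C2 path_quot_cat_def by simp
  have bij: "bij_betw Fm (Mor ?C1) (Mor ?C2)"
    unfolding M1 M2 bij_betw_def
  proof
    show "inj_on Fm (cls1 ` P1)"
    proof (rule inj_onI)
      fix X Y assume "X \<in> cls1 ` P1" "Y \<in> cls1 ` P1" "Fm X = Fm Y"
      then obtain p q where pq: "p \<in> P1" "q \<in> P1" "X = cls1 p" "Y = cls1 q" "Fm X = Fm Y" by auto
      then have "cls2 (strip p) = cls2 (strip q)" using Fm_cls by simp
      then have "EE (strip p) (strip q)" using cls2_eq strip_P2 pq by blast
      then show "X = Y" using cls1_eq pq by simp
    qed
    show "Fm ` cls1 ` P1 = cls2 ` P2"
    proof
      show "Fm ` cls1 ` P1 \<subseteq> cls2 ` P2" using Fm_cls strip_P2 by auto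
      show "cls2 ` P2 \<subseteq> Fm ` cls1 ` P1"
      proof
        fix Y assume "Y \<in> cls2 ` P2"
        then obtain v xs where Y: "Y = cls2 (v, xs)" "(v, xs) \<in> P2" by auto
        have p: "(v, map Inl xs) \<in> P1" using P2_pv[OF Y(2)] Y(2) by (auto simp: P1_iff P2_iff)
        have "Fm (cls1 (v, map Inl xs)) = Y" using Fm_cls[OF p] Y unfolding strip_def by simp
        then show "Y \<in> Fm ` cls1 ` P1" using p by blast
      qed
    qed
  qed
  have dc: "\<forall>f\<in>Mor ?C1. Dom ?C2 (Fm f) = id (Dom ?C1 f) \<and> Cod ?C2 (Fm f) = id (Cod ?C1 f)"
  proof
    fix f assume "f \<in> Mor ?C1"
    then obtain p where p: "p \<in> P1" "f = cls1 p" using M1 by auto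
    define p' where "p' = (SOME x. x \<in> cls1 p)"
    define Q where "Q = (SOME x. x \<in> cls2 (strip p))"
    have p': "p' \<in> P1" "EE (strip p) (strip p')" using some1[OF p(1)] p'_def by auto
    have Q: "Q \<in> P2" "EE (strip p) Q" using some2[OF strip_P2[OF p(1)]] Q_def by auto
    have fm: "Fm f = cls2 (strip p)" using Fm_cls p by simp
    have d1: "Dom ?C1 f = fst p'" unfolding C1 path_quot_cat_def p'_def p by simp
    have d2: "Dom ?C2 (Fm f) = fst Q" unfolding C2 path_quot_cat_def Q_def fm by simp
    have c1: "Cod ?C1 f = ptgt tgt (fst p') (snd p')"
      unfolding C1 path_quot_cat_def p'_def p by (simp add: case_prod_unfold)
    have c2: "Cod ?C2 (Fm f) = ptgt t (fst Q) (snd Q)"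
      unfolding C2 path_quot_cat_def Q_def fm by (simp add: case_prod_unfold)
    have e1: "fst Q = fst p" "ptgt t (fst Q) (snd Q) = ptgt tgt (fst p) (snd p)"
      using EE_inv[OF Q(2) strip_P2[OF p(1)]] strip_ptg[OF p(1)] by auto
    have e2: "fst p' = fst p" "ptgt tgt (fst p') (snd p') = ptgt tgt (fst p) (snd p)"
      using EE_inv[OF p'(2) strip_P2[OF p(1)]] strip_ptg[OF p(1)] strip_ptg[OF p'(1)] by auto
    show "Dom ?C2 (Fm f) = id (Dom ?C1 f) \<and> Cod ?C2 (Fm f) = id (Cod ?C1 f)"
      using d1 d2 c1 c2 e1 e2 by simp
  qed
  have idm: "\<forall>a\<in>Ob ?C1. Fm (Idm ?C1 a) = Idm ?C2 (id a)"
  proof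
    fix a assume "a \<in> Ob ?C1"
    then have a: "a \<in> V" unfolding C1 path_quot_cat_def by simp
    have "(a, []) \<in> P1" using a by (simp add: P1_iff)
    then show "Fm (Idm ?C1 a) = Idm ?C2 (id a)"
      unfolding C1 C2 path_quot_cat_def using Fm_cls by (simp add: strip_def)
  qed
  have comp: "\<forall>f\<in>Mor ?C1. \<forall>g\<in>Mor ?C1. Cod ?C1 f = Dom ?C1 g \<longrightarrow>
          Fm (Comp ?C1 f g) = Comp ?C2 (Fm f) (Fm g)"
  proof (intro ballI impI)
    fix f g assume "f \<in> Mor ?C1" "g \<in> Mor ?C1" and cd: "Cod ?C1 f = Dom ?C1 g"
    then obtain p q where p: "p \<in> P1" "f = cls1 p" and q: "q \<in> P1" "g = cls1 q" using M1 by auto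
    define p' where "p' = (SOME x. x \<in> cls1 p)"
    define q' where "q' = (SOME x. x \<in> cls1 q)"
    define P where "P = (SOME x. x \<in> cls2 (strip p))"
    define Q where "Q = (SOME x. x \<in> cls2 (strip q))"
    have p': "p' \<in> P1" "EE (strip p) (strip p')" using some1[OF p(1)] p'_def by auto
    have q': "q' \<in> P1" "EE (strip q) (strip q')" using some1[OF q(1)] q'_def by auto
    have P: "P \<in> P2" "EE (strip p) P" using some2[OF strip_P2[OF p(1)]] P_def by auto
    have Q: "Q \<in> P2" "EE (strip q) Q" using some2[OF strip_P2[OF q(1)]] Q_def by auto
    have cd': "ptgt tgt (fst p') (snd p') = fst q'"
      using cd unfolding C1 path_quot_cat_def p'_def q'_def p q by (simp add: case_prod_unfold)
    have r: "(fst p', snd p' @ snd q') \<in> P1" using p'(1) q'(1) cd'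
      by (cases p', cases q') (auto simp: P1_iff)
    have l: "Fm (Comp ?C1 f g) = cls2 (fst p', strp (snd p') @ strp (snd q'))"
      unfolding C1 path_quot_cat_def p q using Fm_cls[OF r] p'_def q'_def by (simp add: strip_def)
    have rr: "Comp ?C2 (Fm f) (Fm g) = cls2 (fst P, snd P @ snd Q)"
      unfolding C2 path_quot_cat_def using Fm_cls p q P_def Q_def by simp
    have E1': "EE (strip p') P" using P(2) p'(2) EE_sym equivclp_trans by metis
    have E2': "EE (strip q') Q" using Q(2) q'(2) EE_sym equivclp_trans by metis
    have fP: "fst P = fst p'" using EE_inv[OF E1' strip_P2[OF p'(1)]] by simp
    have sp: "(fst p', strp (snd p')) \<in> P2" "(fst q', strp (snd q')) \<in> P2"
      using strip_P2[OF p'(1)] strip_P2[OF q'(1)] unfolding strip_def by auto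
    have fQ: "fst Q = fst q'" using EE_inv[OF E2' strip_P2[OF q'(1)]] by simp
    have pt: "ptgt t (fst p') (strp (snd p')) = fst q'" using strip_ptg[OF p'(1)] cd' by simp
    have "EE (fst p', strp (snd p') @ strp (snd q')) (fst p', snd P @ snd Q)"
      using EE_cat[OF _ sp(1) _ sp(2) pt, of "snd P" "snd Q"] E1' E2' fP fQ
      by (cases P, cases Q) (simp add: strip_def)
    moreover have "(fst p', strp (snd p') @ strp (snd q')) \<in> P2"
      using strip_P2[OF r] by (simp add: strip_def)
    moreover have "(fst P, snd P @ snd Q) \<in> P2"
      using EE_inv[OF calculation(1) calculation(2)] fP by simp
    ultimately show "Fm (Comp ?C1 f g) = Comp ?C2 (Fm f) (Fm g)"
      using l rr cls2_eq fP by simp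
  qed
  have obj: "bij_betw id (Ob ?C1) (Ob ?C2)" unfolding C1 C2 path_quot_cat_def by simp
  show ?thesis unfolding cat_iso_def
    using obj bij dc idm comp by blast
qed

end

theorem lemma5p6:
  fixes V :: "'v set" and A :: "'a set" and s t :: "'a \<Rightarrow> 'v"
    and lact ract :: "'a \<Rightarrow> 'a \<Rightarrow> 'a"
  assumes "qYB_map V A s t lact ract"
    and "qYB_involutive A s t lact ract"
    and "qYB_left_nondeg A s t lact"
  shows "cat_iso
           (rc_struct_cat V (compl_arrows V A) (compl_src s) (compl_tgt t)
              (compl_op s t (yb_star A s t lact)) Inr)
           (yb_struct_cat V A s t lact ract)"
proof -
  interpret YB V A s t lact ract using assms by (unfold_locales)
  show ?thesis by (rule main)
qed

end
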